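(* Let $L$ be an $S$-Noetherian lattice, where $S$ is a multiplicatively closed subset of $L$ with $1\in S$, $0\notin S$. Then every radical element $a$ of $L$ (i.e., $a=\sqrt a$) such that $t\not\le a$ for all $t\in S$ is the meet of finitely many $S$-prime elements.
   Context: A multiplicative lattice is a complete lattice with a commutative, associative multiplication distributing over arbitrary joins, with $1$ as identity; $L_*$ is the set of compact elements; $(a:b)=\bigvee\{x\mid xb\le a\}$. An element $m$ is principal if $a\wedge mb=m((a:m)\wedge b)$ and $a\vee(b:m)=(am\vee b):m$ for all $a,b$. An $r$-lattice is a modular, principally generated, compactly generated multiplicative lattice with $1$ compact. A multiplicatively closed subset is a nonempty $S\subseteq L_*$ closed under multiplication. An element $a$ is $S$-compact if $sa\le b\le a$ for some compact $b$ and $s\in S$; an $S$-Noetherian lattice is an $r$-lattice in which every element is $S$-compact. $\sqrt a=\bigvee\{x\in L_*\mid x^n\le a\text{ for some }n\in\mathbb{Z}^+\}$. A proper element $p$ with $t\not\le p$ for all $t\in S$ is $S$-prime if there exists $s\in S$ such that for all $a,b\in L$, $ab\le p$ implies $sa\le p$ or $sb\le p$. *)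

theory Defs
  imports Main
begin

class multiplicative_lattice = complete_lattice + comm_monoid_mult +
  assumes mult_Sup_distrib: "a * Sup B = Sup ((\<lambda>b. a * b) ` B)"
  assumes one_is_top: "1 = top"

context complete_lattice
begin
definition compact :: "'a \<Rightarrow> bool" where
  "compact x \<longleftrightarrow> (\<forall>B. x \<le> Sup B \<longrightarrow> (\<exists>F\<subseteq>B. finite F \<and> x \<le> Sup F))"

end

context multiplicative_lattice
begin
definition res :: "'a \<Rightarrow> 'a \<Rightarrow> 'a" where
  "res a b = Sup {x. x * b \<le> a}"

definition principal :: "'a \<Rightarrow> bool" where
  "principal m \<longleftrightarrow> (\<forall>a b. inf a (m * b) = m * inf (res a m) b
                        \<and> sup a (res b m) = res (sup (a * m) b) m)"

end

class r_lattice = multiplicative_lattice +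
  assumes modular: "a \<le> c \<Longrightarrow> sup a (inf b c) = inf (sup a b) c"
  assumes principally_generated: "x = Sup {m. principal m \<and> m \<le> x}"
  assumes compactly_generated: "x = Sup {c. compact c \<and> c \<le> x}"
  assumes one_compact: "compact 1"

definition mult_closed :: "'a::multiplicative_lattice set \<Rightarrow> bool" where
  "mult_closed S \<longleftrightarrow> S \<noteq> {} \<and> (\<forall>s\<in>S. compact s) \<and> (\<forall>s\<in>S. \<forall>t\<in>S. s * t \<in> S)"

definition S_compact :: "'a::multiplicative_lattice set \<Rightarrow> 'a \<Rightarrow> bool" where
  "S_compact S a \<longleftrightarrow> (\<exists>s\<in>S. \<exists>b. compact b \<and> s * a \<le> b \<and> b \<le> a)"

definition S_Noetherian :: "'a::r_lattice set \<Rightarrow> bool" where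
  "S_Noetherian S \<longleftrightarrow> (\<forall>a. S_compact S a)"

definition rad :: "'a::multiplicative_lattice \<Rightarrow> 'a" where
  "rad a = Sup {x. compact x \<and> (\<exists>n::nat. n \<ge> 1 \<and> x ^ n \<le> a)}"

definition S_prime :: "'a::multiplicative_lattice set \<Rightarrow> 'a \<Rightarrow> bool" where
  "S_prime S p \<longleftrightarrow> p \<noteq> top \<and> (\<forall>t\<in>S. \<not> t \<le> p) \<and>
     (\<exists>s\<in>S. \<forall>a b. a * b \<le> p \<longrightarrow> s * a \<le> p \<or> s * b \<le> p)"

end

theory Submission
  imports Defs
begin

lemma ml_mult_mono_r:
  fixes a b c :: "'a::multiplicative_lattice"
  assumes "b \<le> c" shows "a * b \<le> a * c"
proof -
  have e: "sup b c = c" using assms by (rule sup_absorb2)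
  have "a * Sup {b, c} = Sup ((\<lambda>x. a * x) ` {b, c})" by (rule mult_Sup_distrib)
  then have "a * sup b c = sup (a * b) (a * c)" by (simp only: image_insert image_empty Sup_insert Sup_empty sup_bot_right)
  then have "a * c = sup (a * b) (a * c)" by (simp only: e)
  then show ?thesis by (metis sup_ge1)
qed

lemma ml_mult_mono:
  fixes a b c d :: "'a::multiplicative_lattice"
  assumes "a \<le> b" "c \<le> d" shows "a * c \<le> b * d"
  by (metis assms ml_mult_mono_r mult.commute order_trans)

lemma ml_mult_le_right:
  fixes a b :: "'a::multiplicative_lattice"
  shows "a * b \<le> b"
proof -
  have "a \<le> 1" by (simp add: one_is_top)
  then have "a * b \<le> 1 * b" by (rule ml_mult_mono) (rule order_refl)
  then show ?thesis by (simp only: mult.left_neutral)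
qed

lemma ml_mult_le_left:
  fixes a b :: "'a::multiplicative_lattice"
  shows "a * b \<le> a"
  by (metis ml_mult_le_right mult.commute)

lemma res_iff:
  fixes a b x :: "'a::multiplicative_lattice"
  shows "x \<le> res a b \<longleftrightarrow> x * b \<le> a"
proof
  assume "x * b \<le> a" then show "x \<le> res a b" unfolding res_def by (auto intro: Sup_upper)
next
  assume h: "x \<le> res a b"
  have "res a b * b = b * Sup {x. x * b \<le> a}" unfolding res_def by (rule mult.commute)
  also have "\<dots> = Sup ((\<lambda>y. b * y) ` {x. x * b \<le> a})" by (rule mult_Sup_distrib)
  also have "\<dots> \<le> a" by (rule Sup_least) (metis (mono_tags, lifting) image_iff mem_Collect_eq mult.commute)
  finally have r1: "res a b * b \<le> a" .
  have r2: "x * b \<le> res a b * b" by (rule ml_mult_mono[OF h order_refl])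
  show "x * b \<le> a" by (rule order_trans[OF r2 r1])
qed

lemma res_mono:
  fixes a a' b :: "'a::multiplicative_lattice"
  assumes "a \<le> a'" shows "res a b \<le> res a' b"
  using assms res_iff by (metis order_refl order_trans)

lemma res_res:
  fixes a b d :: "'a::multiplicative_lattice"
  shows "res (res a b) d = res a (b * d)"
proof -
  have "x \<le> res (res a b) d \<longleftrightarrow> x \<le> res a (b * d)" for x
    by (simp add: res_iff mult.assoc mult.commute mult.left_commute)
  then show ?thesis by (meson order.antisym order_refl)
qed

lemma ml_power_mono:
  fixes a b :: "'a::multiplicative_lattice"
  assumes "a \<le> b" shows "a ^ n \<le> b ^ n"
  by (induction n) (auto intro: ml_mult_mono assms)

lemma ml_power_le:
  fixes y :: "'a::multiplicative_lattice"
  assumes "1 \<le> n" shows "y ^ n \<le> y"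
proof -
  obtain m where "n = Suc m" using assms by (cases n) auto
  then show ?thesis by (simp add: ml_mult_le_left)
qed

lemma le_by_compact:
  fixes z c :: "'a::r_lattice"
  assumes "\<And>w. compact w \<Longrightarrow> w \<le> z \<Longrightarrow> w \<le> c"
  shows "z \<le> c"
proof -
  have "z = Sup {w. compact w \<and> w \<le> z}" by (rule compactly_generated)
  also have "\<dots> \<le> c" using assms by (auto intro: Sup_least)
  finally show ?thesis .
qed

definition rc :: "'a::multiplicative_lattice \<Rightarrow> bool" where
  "rc c \<longleftrightarrow> (\<forall>z n. compact z \<and> 1 \<le> n \<and> z ^ n \<le> c \<longrightarrow> z \<le> c)"

lemma rad_rc:
  fixes c :: "'a::multiplicative_lattice"
  assumes "rad c = c" shows "rc c"
  unfolding rc_def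
proof (intro allI impI)
  fix z n assume "compact z \<and> 1 \<le> n \<and> z ^ n \<le> c"
  then have "z \<le> rad c" unfolding rad_def by (auto intro: Sup_upper)
  then show "z \<le> c" using assms by simp
qed

lemma rc_sq:
  fixes c z :: "'a::r_lattice"
  assumes "rc c" "z * z \<le> c" shows "z \<le> c"
proof (rule le_by_compact)
  fix w assume w: "compact w" "w \<le> z"
  have "w ^ 2 \<le> c" using ml_mult_mono[OF w(2) w(2)] assms(2) by (simp add: power2_eq_square)
  then show "w \<le> c" using assms(1) w unfolding rc_def by (metis one_le_numeral)
qed

lemma rc_res:
  fixes c y :: "'a::r_lattice"
  assumes "rc c" shows "rc (res c y)"
  unfolding rc_def
proof (intro allI impI)
  fix z and n :: nat assume h: "compact z \<and> 1 \<le> n \<and> z ^ n \<le> res c y"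
  have "z * y \<le> c"
  proof (rule le_by_compact)
    fix w assume w: "compact w" "w \<le> z * y"
    have "w ^ n \<le> (z * y) ^ n" using w(2) by (rule ml_power_mono)
    also have "\<dots> = z ^ n * y ^ n" by (simp add: power_mult_distrib)
    also have "\<dots> \<le> z ^ n * y" using h by (intro ml_mult_mono_r ml_power_le) auto
    also have "\<dots> \<le> c" using h res_iff by blast
    finally show "w \<le> c" using assms w h unfolding rc_def by blast
  qed
  then show "z \<le> res c y" by (simp add: res_iff)
qed


lemma res_le_mult:
  fixes a u v :: "'a::multiplicative_lattice"
  shows "res a u \<le> res a (u * v)"
proof -
  have "res a u * (u * v) = (res a u * u) * v" by (simp only: mult.assoc)
  also have "\<dots> \<le> res a u * u" by (rule ml_mult_le_left)
  also have "\<dots> \<le> a" using res_iff[of "res a u" a u] by blast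
  finally show ?thesis using res_iff by blast
qed

definition satS :: "'a::multiplicative_lattice set \<Rightarrow> 'a \<Rightarrow> bool" where
  "satS S c \<longleftrightarrow> (\<forall>s\<in>S. res c s \<le> c)"

definition isprime :: "'a::multiplicative_lattice \<Rightarrow> bool" where
  "isprime p \<longleftrightarrow> (\<forall>x y. x * y \<le> p \<longrightarrow> x \<le> p \<or> y \<le> p)"

lemma sat_res:
  fixes d e :: "'a::multiplicative_lattice"
  assumes "satS S d" shows "satS S (res d e)"
  unfolding satS_def
proof
  fix s assume s: "s \<in> S"
  have "res (res d e) s = res (res d s) e" by (simp only: res_res mult.commute)
  also have "\<dots> \<le> res d e" using assms s unfolding satS_def by (blast intro: res_mono)
  finally show "res (res d e) s \<le> res d e" .
qed

lemma wf_sat: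
  fixes S :: "'a::r_lattice set"
  assumes "S_Noetherian S"
  shows "wf {(y, x). satS S x \<and> satS S y \<and> x < y}"
proof (rule ccontr)
  assume "\<not> ?thesis"
  then obtain f where f: "\<forall>i. (f (Suc i), f i) \<in> {(y, x). satS S x \<and> satS S y \<and> x < y}"
    using wf_iff_no_infinite_down_chain by blast
  hence fs: "\<And>i. f i < f (Suc i)" "\<And>i. satS S (f i)" by auto
  have mono: "\<And>i j. i \<le> j \<Longrightarrow> f i \<le> f j"
    using lift_Suc_mono_le[of f] fs(1) less_imp_le by metis
  define m where "m = Sup (range f)"
  obtain s b where sb: "s \<in> S" "compact b" "s * m \<le> b" "b \<le> m"
    using assms unfolding S_Noetherian_def S_compact_def by blast
  obtain F where F: "F \<subseteq> range f" "finite F" "b \<le> Sup F"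
    using sb(2,4) unfolding compact_def m_def by blast
  obtain K where K: "finite K" "F = f ` K" using finite_subset_image[OF F(2) F(1)] by blast
  obtain k where k: "\<forall>n\<in>K. n \<le> k" using K(1) finite_nat_set_iff_bounded_le by blast
  have "Sup F \<le> f k" unfolding K(2)
  proof (rule Sup_least)
    fix z assume "z \<in> f ` K"
    then obtain i where "i \<in> K" "z = f i" by blast
    then show "z \<le> f k" using k mono by blast
  qed
  then have "s * m \<le> f k" using sb F(3) by (metis order_trans)
  then have "m \<le> res (f k) s" using res_iff by (metis mult.commute)
  also have "\<dots> \<le> f k" using fs(2) sb(1) unfolding satS_def by blast
  finally have "f (Suc k) \<le> f k" unfolding m_def by (metis Sup_upper rangeI order_trans)
  with fs(1)[of k] show False by simp
qed

lemma decomp: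
  fixes S :: "'a::r_lattice set"
  assumes N: "S_Noetherian S"
  shows "satS S c \<Longrightarrow> rc c \<Longrightarrow> (\<forall>t\<in>S. \<not> t \<le> c) \<Longrightarrow>
     \<exists>P. finite P \<and> (\<forall>p\<in>P. isprime p \<and> (\<forall>t\<in>S. \<not> t \<le> p)) \<and> c = Inf P"
proof (induction c rule: wf_induct_rule[OF wf_sat[OF N]])
  case (1 c)
  show ?case
  proof (cases "isprime c")
    case True then show ?thesis using 1 by (intro exI[of _ "{c}"]) auto
  next
    case False
    then obtain x y where xy: "x * y \<le> c" "\<not> x \<le> c" "\<not> y \<le> c" unfolding isprime_def by blast
    define c1 where "c1 = res c y"
    define c2 where "c2 = res c c1"
    have s1: "satS S c1" "satS S c2" unfolding c1_def c2_def using 1 by (blast intro: sat_res)+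
    have r1: "rc c1" "rc c2" unfolding c1_def c2_def using 1 by (blast intro: rc_res)+
    have x1: "x \<le> c1" unfolding c1_def using xy res_iff by blast
    have cc1: "c \<le> c1" unfolding c1_def using res_iff ml_mult_le_left by blast
    have c1c: "c1 * y \<le> c" unfolding c1_def using res_iff by blast
    have y2: "y \<le> c2" unfolding c2_def using c1c res_iff by (metis mult.commute)
    have cc2: "c \<le> c2" unfolding c2_def using res_iff ml_mult_le_left by blast
    have d1: "\<forall>t\<in>S. \<not> t \<le> c1"
    proof (intro ballI notI)
      fix t assume t: "t \<in> S" "t \<le> c1"
      then have "t * y \<le> c" unfolding c1_def using res_iff by blast
      then have "y \<le> res c t" using res_iff by (metis mult.commute)
      also have "\<dots> \<le> c" using 1(2) t(1) unfolding satS_def by blast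
      finally show False using xy by blast
    qed
    have d2: "\<forall>t\<in>S. \<not> t \<le> c2"
    proof (intro ballI notI)
      fix t assume t: "t \<in> S" "t \<le> c2"
      then have "t * c1 \<le> c" unfolding c2_def using res_iff by blast
      then have "c1 \<le> res c t" using res_iff by (metis mult.commute)
      also have "\<dots> \<le> c" using 1(2) t(1) unfolding satS_def by blast
      finally show False using xy x1 by (metis order_trans)
    qed
    have lt1: "c < c1" using cc1 x1 xy by (metis less_le order_trans)
    have lt2: "c < c2" using cc2 y2 xy by (metis less_le order_trans)
    obtain P1 where P1: "finite P1" "\<forall>p\<in>P1. isprime p \<and> (\<forall>t\<in>S. \<not> t \<le> p)" "c1 = Inf P1"
      using 1(1)[of c1] lt1 s1 r1 d1 1(2) by blast
    obtain P2 where P2: "finite P2" "\<forall>p\<in>P2. isprime p \<and> (\<forall>t\<in>S. \<not> t \<le> p)" "c2 = Inf P2"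
      using 1(1)[of c2] lt2 s1 r1 d2 1(2) by blast
    have "inf c1 c2 \<le> c"
    proof (rule rc_sq[OF 1(3)])
      have "inf c1 c2 * inf c1 c2 \<le> inf c1 c2 * c1" by (rule ml_mult_mono_r) (rule inf_le1)
      also have "\<dots> \<le> c" using res_iff[of "inf c1 c2" c c1] inf_le2[of c1 c2] unfolding c2_def by blast
      finally show "inf c1 c2 * inf c1 c2 \<le> c" .
    qed
    then have "c = inf c1 c2" using cc1 cc2 by (metis order.antisym le_inf_iff)
    also have "\<dots> = Inf (P1 \<union> P2)" using P1(3) P2(3) by (simp only: Inf_union_distrib)
    finally show ?thesis using P1 P2 by (intro exI[of _ "P1 \<union> P2"]) blast
  qed
qed

lemma res_bound:
  fixes S :: "'a::multiplicative_lattice set"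
  assumes "mult_closed S" "1 \<in> S"
  shows "finite K \<Longrightarrow> K \<subseteq> S \<Longrightarrow> \<exists>t\<in>S. \<forall>k\<in>K. res a k \<le> res a t"
proof (induction K rule: finite_induct)
  case empty then show ?case using assms by blast
next
  case (insert k K)
  then obtain t where t: "t \<in> S" "\<forall>j\<in>K. res a j \<le> res a t" by blast
  have tk: "t * k \<in> S" using assms(1) t(1) insert(4) unfolding mult_closed_def by blast
  have "\<forall>j\<in>insert k K. res a j \<le> res a (t * k)"
  proof
    fix j assume "j \<in> insert k K"
    moreover have "res a k \<le> res a (t * k)" using res_le_mult[of a k t] by (simp only: mult.commute)
    moreover have "res a t \<le> res a (t * k)" by (rule res_le_mult)
    ultimately show "res a j \<le> res a (t * k)" using t(2) by (metis insertE order_trans)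
  qed
  then show ?case using tk by blast
qed

theorem mainTheorem11:
  fixes S :: "'a::r_lattice set" and a :: 'a
  assumes "mult_closed S" and "S_Noetherian S"
    and "1 \<in> S" and "bot \<notin> S"
    and "rad a = a" and "\<forall>t\<in>S. \<not> t \<le> a"
  shows "\<exists>P. finite P \<and> (\<forall>p\<in>P. S_prime S p) \<and> a = Inf P"
proof -
  have rca: "rc a" using assms(5) by (rule rad_rc)
  define a' where "a' = Sup ((\<lambda>t. res a t) ` S)"
  obtain s0 b where sb: "s0 \<in> S" "compact b" "s0 * a' \<le> b" "b \<le> a'"
    using assms(2) unfolding S_Noetherian_def S_compact_def by blast
  obtain F where F: "F \<subseteq> (\<lambda>t. res a t) ` S" "finite F" "b \<le> Sup F"
    using sb(2,4) unfolding compact_def a'_def by blast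
  obtain K where K: "K \<subseteq> S" "finite K" "F = (\<lambda>t. res a t) ` K"
    using finite_subset_image[OF F(2) F(1)] by blast
  obtain t where t: "t \<in> S" "\<forall>k\<in>K. res a k \<le> res a t" using res_bound[OF assms(1,3) K(2,1)] by blast
  define s where "s = t * s0"
  have sS: "s \<in> S" unfolding s_def using assms(1) t(1) sb(1) unfolding mult_closed_def by blast
  have "Sup F \<le> res a t" unfolding K(3) using t(2) by (blast intro: Sup_least)
  then have "s0 * a' \<le> res a t" using sb F(3) by (metis order_trans)
  then have "a' \<le> res (res a t) s0" using res_iff by (metis mult.commute)
  then have a'le: "a' \<le> res a s" unfolding s_def by (simp only: res_res)
  define c where "c = res a s"
  have bound: "\<forall>u\<in>S. res a u \<le> c"
    using a'le unfolding c_def a'_def by (meson SUP_le_iff)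
  have satc: "satS S c" unfolding satS_def
  proof
    fix u assume "u \<in> S"
    then have "s * u \<in> S" using sS assms(1) unfolding mult_closed_def by blast
    moreover have "res c u = res a (s * u)" unfolding c_def by (rule res_res)
    ultimately show "res c u \<le> c" using bound by simp
  qed
  have rcc: "rc c" unfolding c_def using rca by (rule rc_res)
  have dc: "\<forall>u\<in>S. \<not> u \<le> c"
  proof (intro ballI notI)
    fix u assume u: "u \<in> S" "u \<le> c"
    then have "u * s \<le> a" unfolding c_def using res_iff by blast
    moreover have "u * s \<in> S" using u sS assms(1) unfolding mult_closed_def by blast
    ultimately show False using assms(6) by blast
  qed
  obtain P where P: "finite P" "\<forall>p\<in>P. isprime p \<and> (\<forall>t\<in>S. \<not> t \<le> p)" "c = Inf P"
    using decomp[OF assms(2) satc rcc dc] by blast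
  define J where "J = res a c"
  have sJ: "s \<le> J" unfolding J_def c_def using res_iff by (metis mult.commute order_refl)
  have ac: "a \<le> c" unfolding c_def using res_iff ml_mult_le_left by blast
  have aJ: "a \<le> J" unfolding J_def using res_iff ml_mult_le_left by blast
  have Pne: "P \<noteq> {}"
  proof
    assume "P = {}"
    then have "c = top" using P(3) by simp
    then show False using dc assms(3) by simp
  qed
  define Q where "Q = (\<lambda>p. inf p J) ` P"
  have "finite Q" unfolding Q_def using P(1) by blast
  moreover have "\<forall>q\<in>Q. S_prime S q"
  proof
    fix q assume "q \<in> Q"
    then obtain p where p: "p \<in> P" "q = inf p J" unfolding Q_def by blast
    have pp: "isprime p" "\<forall>t\<in>S. \<not> t \<le> p" using P(2) p(1) by auto
    have "q \<noteq> top"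
    proof
      assume "q = top"
      then have "p = top" using p(2) by (metis inf.boundedE top_unique)
      then show False using pp(2) assms(3) by simp
    qed
    moreover have "\<forall>u\<in>S. \<not> u \<le> q" using pp(2) p(2) by (metis le_inf_iff)
    moreover have "\<forall>x y. x * y \<le> q \<longrightarrow> s * x \<le> q \<or> s * y \<le> q"
    proof (intro allI impI)
      fix x y assume "x * y \<le> q"
      then have "x * y \<le> p" using p(2) by (metis le_inf_iff)
      then have "x \<le> p \<or> y \<le> p" using pp(1) unfolding isprime_def by blast
      moreover have "s * x \<le> J" "s * y \<le> J" using sJ ml_mult_le_left order_trans by blast+
      moreover have "s * x \<le> x" "s * y \<le> y" by (rule ml_mult_le_right)+
      ultimately show "s * x \<le> q \<or> s * y \<le> q" unfolding p(2) by (metis le_inf_iff order_trans)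
    qed
    ultimately show "S_prime S q" unfolding S_prime_def using sS by blast
  qed
  moreover have "a = Inf Q"
  proof (rule order.antisym)
    show "a \<le> Inf Q" unfolding Q_def
    proof (rule Inf_greatest)
      fix q assume "q \<in> (\<lambda>p. inf p J) ` P"
      then obtain p where "p \<in> P" "q = inf p J" by blast
      moreover have "c \<le> p" using P(3) \<open>p \<in> P\<close> by (metis Inf_lower)
      ultimately show "a \<le> q" using ac aJ by (metis le_inf_iff order_trans)
    qed
  next
    define z where "z = Inf Q"
    have zJ: "z \<le> J" using Pne unfolding z_def Q_def by (metis INF_lower all_not_in_conv inf.boundedE)
    have zc: "z \<le> c" unfolding P(3) z_def Q_def
      by (rule Inf_greatest) (metis INF_lower inf.boundedE)
    have "z * z \<le> z * c" using zc by (rule ml_mult_mono_r)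
    also have "\<dots> \<le> a" using zJ res_iff unfolding J_def by blast
    finally show "Inf Q \<le> a" using rc_sq[OF rca] unfolding z_def by blast
  qed
  ultimately show ?thesis by blast
qed

end
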